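(* Every partial $H$-module $(M,\pi)$ admits a proper and minimal dilation. More precisely, let $\operatorname{Hom}_k(H,M)$ be the left $H$-module with action $(h\triangleright f)(k)=f(kh)$. Define $\varphi:M\to\operatorname{Hom}_k(H,M)$ by $\varphi(m)(h)=\pi(h)(m)$, let $\overline M=H\triangleright\varphi(M)$ be the $H$-submodule generated by $\varphi(M)$, and define $T_\pi:\overline M\to\overline M$ by $T_\pi(f)=\varphi(f(1_H))$. Then $((\overline M,T_\pi),\varphi)$ is a proper and minimal dilation of $(M,\pi)$. It is called the standard dilation of $M$.
   Context: Throughout, $k$ is a field and $H$ is a Hopf algebra over $k$ with bijective antipode $S$, counit $\epsilon$, and Sweedler notation $\Delta(h)=h_{(1)}\otimes h_{(2)}$. Unadorned tensor products are over $k$. A partial representation of $H$ in a unital algebra $B$ is a linear map $\pi:H\to B$ satisfying, for all $h,k\in H$: - $\pi(1_H)=1_B$; - $\pi(h)\pi(k_{(1)})\pi(S(k_{(2)}))=\pi(hk_{(1)})\pi(S(k_{(2)}))$; - $\pi(h_{(1)})\pi(S(h_{(2)}))\pi(k)=\pi(h_{(1)})\pi(S(h_{(2)})k)$; - $\pi(h)\pi(S(k_{(1)}))\pi(k_{(2)})=\pi(hS(k_{(1)}))\pi(k_{(2)})$; - $\pi(S(h_{(1)}))\pi(h_{(2)})\pi(k)=\pi(S(h_{(1)}))\pi(h_{(2)}k)$. A partial $H$-module is a pair $(M,\pi)$ with $M$ a $k$-vector space and $\pi:H\to\mathrm{End}_k(M)$ a partial representation. A morphism of partial $H$-modules is a linear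 map $f$ with $f\circ\pi(h)=\pi'(h)\circ f$ for all $h\in H$. For a left $H$-module $M$ (action $\triangleright$) and a linear $T:M\to M$, put $T_h(m)=h_{(1)}\triangleright T(S(h_{(2)})\triangleright m)$. A projection $T$ (i.e. $T^2=T$) satisfies the c-condition if $T_h\circ T=T\circ T_h$ for all $h\in H$. If $T$ is such a projection, then $T(M)$ is a partial $H$-module via $\pi_T(h)(m)=T(h\triangleright m)$ for $m\in T(M)$. A dilation of a partial $H$-module $(M,\pi)$ is a pair $((N,T),\theta)$ where: - $N$ is a left $H$-module; - $T$ is a projection on $N$ satisfying the c-condition; - $\theta:M\to T(N)$ is an isomorphism of partial $H$-modules from $(M,\pi)$ to $(T(N),\pi_T)$. The dilation is proper if $N$ is generated as an $H$-module by $T(N)=\theta(M)$. It is minimal if $N$ contains no nonzero $H$-submodule $N'$ with $T(N')=0$. *)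

theory Defs
  imports Complex_Main "HOL-Library.Function_Algebras"
begin

text \<open>The comultiplication of an element h is represented by a finite list
  cop h = [(a_1,b_1),...,(a_n,b_n)] with Delta(h) = sum_i a_i (x) b_i.
  Any expression bilinear in (h_(1), h_(2)) is then evaluated as a sum over
  this list; equalities in tensor products are tested against all
  multilinear forms with values in k (which separate points over a field).\<close>

definition sw :: "('h \<Rightarrow> ('h \<times> 'h) list) \<Rightarrow> 'h \<Rightarrow> ('h \<Rightarrow> 'h \<Rightarrow> 'v::comm_monoid_add) \<Rightarrow> 'v"
  where "sw cop h B = sum_list (map (\<lambda>(a, b). B a b) (cop h))"

definition bilin :: "('k::field \<Rightarrow> 'h::ab_group_add \<Rightarrow> 'h) \<Rightarrow> ('h \<Rightarrow> 'h \<Rightarrow> 'k) \<Rightarrow> bool"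
  where "bilin s B \<longleftrightarrow>
     (\<forall>x y z. B (x + y) z = B x z + B y z) \<and> (\<forall>x y z. B x (y + z) = B x y + B x z) \<and>
     (\<forall>c x y. B (s c x) y = c * B x y) \<and> (\<forall>c x y. B x (s c y) = c * B x y)"

definition trilin :: "('k::field \<Rightarrow> 'h::ab_group_add \<Rightarrow> 'h) \<Rightarrow> ('h \<Rightarrow> 'h \<Rightarrow> 'h \<Rightarrow> 'k) \<Rightarrow> bool"
  where "trilin s F \<longleftrightarrow>
     (\<forall>x x' y z. F (x + x') y z = F x y z + F x' y z) \<and>
     (\<forall>x y y' z. F x (y + y') z = F x y z + F x y' z) \<and>
     (\<forall>x y z z'. F x y (z + z') = F x y z + F x y z') \<and>
     (\<forall>c x y z. F (s c x) y z = c * F x y z) \<and>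
     (\<forall>c x y z. F x (s c y) z = c * F x y z) \<and>
     (\<forall>c x y z. F x y (s c z) = c * F x y z)"

definition hopf_algebra ::
  "('k::field \<Rightarrow> 'h::ring_1 \<Rightarrow> 'h) \<Rightarrow> ('h \<Rightarrow> ('h \<times> 'h) list) \<Rightarrow> ('h \<Rightarrow> 'k) \<Rightarrow> ('h \<Rightarrow> 'h) \<Rightarrow> bool"
  where "hopf_algebra scaleH cop eps S \<longleftrightarrow>
    vector_space scaleH \<and>
    (\<forall>c x y. scaleH c (x * y) = scaleH c x * y \<and> scaleH c (x * y) = x * scaleH c y) \<and>
    \<comment> \<open>Delta is linear\<close>
    (\<forall>B. bilin scaleH B \<longrightarrow>
        (\<forall>x y. sw cop (x + y) B = sw cop x B + sw cop y B) \<and>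
        (\<forall>c x. sw cop (scaleH c x) B = c * sw cop x B)) \<and>
    \<comment> \<open>coassociativity\<close>
    (\<forall>F. trilin scaleH F \<longrightarrow> (\<forall>h.
        sw cop h (\<lambda>a b. sw cop a (\<lambda>a1 a2. F a1 a2 b)) =
        sw cop h (\<lambda>a b. sw cop b (\<lambda>b1 b2. F a b1 b2)))) \<and>
    \<comment> \<open>counit\<close>
    Vector_Spaces.linear scaleH (\<lambda>c x. c * x) eps \<and>
    (\<forall>h. sw cop h (\<lambda>a b. scaleH (eps a) b) = h \<and> sw cop h (\<lambda>a b. scaleH (eps b) a) = h) \<and>
    \<comment> \<open>Delta and eps are algebra maps\<close>
    (\<forall>B. bilin scaleH B \<longrightarrow>
        (\<forall>h k. sw cop (h * k) B = sw cop h (\<lambda>a b. sw cop k (\<lambda>c d. B (a * c) (b * d)))) \<and>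
        sw cop 1 B = B 1 1) \<and>
    (\<forall>h k. eps (h * k) = eps h * eps k) \<and> eps 1 = 1 \<and>
    \<comment> \<open>antipode\<close>
    Vector_Spaces.linear scaleH scaleH S \<and>
    (\<forall>h. sw cop h (\<lambda>a b. S a * b) = scaleH (eps h) 1 \<and> sw cop h (\<lambda>a b. a * S b) = scaleH (eps h) 1) \<and>
    bij S"

definition partial_module ::
  "('k::field \<Rightarrow> 'h::ring_1 \<Rightarrow> 'h) \<Rightarrow> ('h \<Rightarrow> ('h \<times> 'h) list) \<Rightarrow> ('h \<Rightarrow> 'h) \<Rightarrow>
   ('k \<Rightarrow> 'n::ab_group_add \<Rightarrow> 'n) \<Rightarrow> 'n set \<Rightarrow> ('h \<Rightarrow> 'n \<Rightarrow> 'n) \<Rightarrow> bool"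
  where "partial_module scaleH cop S scaleN V rep \<longleftrightarrow>
    vector_space scaleN \<and> module.subspace scaleN V \<and>
    (\<forall>h. \<forall>v\<in>V. rep h v \<in> V) \<and>
    (\<forall>h. \<forall>v\<in>V. \<forall>w\<in>V. rep h (v + w) = rep h v + rep h w) \<and>
    (\<forall>h c. \<forall>v\<in>V. rep h (scaleN c v) = scaleN c (rep h v)) \<and>
    (\<forall>h k. \<forall>v\<in>V. rep (h + k) v = rep h v + rep k v) \<and>
    (\<forall>c h. \<forall>v\<in>V. rep (scaleH c h) v = scaleN c (rep h v)) \<and>
    (\<forall>v\<in>V. rep 1 v = v) \<and>
    (\<forall>h k. \<forall>v\<in>V. sw cop k (\<lambda>a b. rep h (rep a (rep (S b) v)))
                 = sw cop k (\<lambda>a b. rep (h * a) (rep (S b) v))) \<and>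
    (\<forall>h k. \<forall>v\<in>V. sw cop h (\<lambda>a b. rep a (rep (S b) (rep k v)))
                 = sw cop h (\<lambda>a b. rep a (rep (S b * k) v))) \<and>
    (\<forall>h k. \<forall>v\<in>V. sw cop k (\<lambda>a b. rep h (rep (S a) (rep b v)))
                 = sw cop k (\<lambda>a b. rep (h * S a) (rep b v))) \<and>
    (\<forall>h k. \<forall>v\<in>V. sw cop h (\<lambda>a b. rep (S a) (rep b (rep k v)))
                 = sw cop h (\<lambda>a b. rep (S a) (rep (b * k) v)))"

definition partial_iso ::
  "('k::field \<Rightarrow> 'm::ab_group_add \<Rightarrow> 'm) \<Rightarrow> 'm set \<Rightarrow> ('h \<Rightarrow> 'm \<Rightarrow> 'm) \<Rightarrow>
   ('k \<Rightarrow> 'n::ab_group_add \<Rightarrow> 'n) \<Rightarrow> 'n set \<Rightarrow> ('h \<Rightarrow> 'n \<Rightarrow> 'n) \<Rightarrow> ('m \<Rightarrow> 'n) \<Rightarrow> bool"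
  where "partial_iso scaleM V rep scaleN W rho theta \<longleftrightarrow>
    bij_betw theta V W \<and>
    (\<forall>v\<in>V. \<forall>w\<in>V. theta (v + w) = theta v + theta w) \<and>
    (\<forall>c. \<forall>v\<in>V. theta (scaleM c v) = scaleN c (theta v)) \<and>
    (\<forall>h. \<forall>v\<in>V. theta (rep h v) = rho h (theta v))"

definition H_module ::
  "('k::field \<Rightarrow> 'h::ring_1 \<Rightarrow> 'h) \<Rightarrow> ('k \<Rightarrow> 'n::ab_group_add \<Rightarrow> 'n) \<Rightarrow> 'n set \<Rightarrow>
   ('h \<Rightarrow> 'n \<Rightarrow> 'n) \<Rightarrow> bool"
  where "H_module scaleH scaleN N act \<longleftrightarrow>
    vector_space scaleN \<and> module.subspace scaleN N \<and>
    (\<forall>h. \<forall>n\<in>N. act h n \<in> N) \<and>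
    (\<forall>h. \<forall>n\<in>N. \<forall>n'\<in>N. act h (n + n') = act h n + act h n') \<and>
    (\<forall>h c. \<forall>n\<in>N. act h (scaleN c n) = scaleN c (act h n)) \<and>
    (\<forall>h k. \<forall>n\<in>N. act (h + k) n = act h n + act k n) \<and>
    (\<forall>c h. \<forall>n\<in>N. act (scaleH c h) n = scaleN c (act h n)) \<and>
    (\<forall>n\<in>N. act 1 n = n) \<and>
    (\<forall>h k. \<forall>n\<in>N. act (h * k) n = act h (act k n))"

definition H_submodule :: "('k::field \<Rightarrow> 'n::ab_group_add \<Rightarrow> 'n) \<Rightarrow> ('h \<Rightarrow> 'n \<Rightarrow> 'n) \<Rightarrow> 'n set \<Rightarrow> bool"
  where "H_submodule scaleN act N' \<longleftrightarrow>
    module.subspace scaleN N' \<and> (\<forall>h. \<forall>n\<in>N'. act h n \<in> N')"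

definition gen_submodule ::
  "('k::field \<Rightarrow> 'n::ab_group_add \<Rightarrow> 'n) \<Rightarrow> ('h \<Rightarrow> 'n \<Rightarrow> 'n) \<Rightarrow> 'n set \<Rightarrow> 'n set \<Rightarrow> 'n set"
  where "gen_submodule scaleN act N X =
    \<Inter>{N'. N' \<subseteq> N \<and> H_submodule scaleN act N' \<and> X \<subseteq> N'}"

definition projection :: "('k::field \<Rightarrow> 'n::ab_group_add \<Rightarrow> 'n) \<Rightarrow> 'n set \<Rightarrow> ('n \<Rightarrow> 'n) \<Rightarrow> bool"
  where "projection scaleN N T \<longleftrightarrow>
    (\<forall>n\<in>N. T n \<in> N) \<and>
    (\<forall>n\<in>N. \<forall>n'\<in>N. T (n + n') = T n + T n') \<and>
    (\<forall>c. \<forall>n\<in>N. T (scaleN c n) = scaleN c (T n)) \<and>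
    (\<forall>n\<in>N. T (T n) = T n)"

definition Tconj :: "('h \<Rightarrow> ('h \<times> 'h) list) \<Rightarrow> ('h \<Rightarrow> 'h) \<Rightarrow> ('h \<Rightarrow> 'n \<Rightarrow> 'n) \<Rightarrow>
    ('n \<Rightarrow> 'n) \<Rightarrow> 'h \<Rightarrow> 'n \<Rightarrow> 'n::ab_group_add"
  where "Tconj cop S act T h n = sw cop h (\<lambda>a b. act a (T (act (S b) n)))"

definition c_condition :: "('h \<Rightarrow> ('h \<times> 'h) list) \<Rightarrow> ('h \<Rightarrow> 'h) \<Rightarrow> 'n set \<Rightarrow>
    ('h \<Rightarrow> 'n \<Rightarrow> 'n) \<Rightarrow> ('n \<Rightarrow> 'n::ab_group_add) \<Rightarrow> bool"
  where "c_condition cop S N act T \<longleftrightarrow>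
    (\<forall>h. \<forall>n\<in>N. Tconj cop S act T h (T n) = T (Tconj cop S act T h n))"

definition dilation ::
  "('k::field \<Rightarrow> 'h::ring_1 \<Rightarrow> 'h) \<Rightarrow> ('h \<Rightarrow> ('h \<times> 'h) list) \<Rightarrow> ('h \<Rightarrow> 'h) \<Rightarrow>
   ('k \<Rightarrow> 'm::ab_group_add \<Rightarrow> 'm) \<Rightarrow> ('h \<Rightarrow> 'm \<Rightarrow> 'm) \<Rightarrow>
   ('k \<Rightarrow> 'n::ab_group_add \<Rightarrow> 'n) \<Rightarrow> 'n set \<Rightarrow> ('h \<Rightarrow> 'n \<Rightarrow> 'n) \<Rightarrow> ('n \<Rightarrow> 'n) \<Rightarrow>
   ('m \<Rightarrow> 'n) \<Rightarrow> bool"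
  where "dilation scaleH cop S scaleM rep scaleN N act T theta \<longleftrightarrow>
    H_module scaleH scaleN N act \<and>
    projection scaleN N T \<and> c_condition cop S N act T \<and>
    partial_iso scaleM UNIV rep scaleN (T ` N) (\<lambda>h n. T (act h n)) theta"

definition proper_dilation ::
  "('k::field \<Rightarrow> 'n::ab_group_add \<Rightarrow> 'n) \<Rightarrow> 'n set \<Rightarrow> ('h \<Rightarrow> 'n \<Rightarrow> 'n) \<Rightarrow> ('n \<Rightarrow> 'n) \<Rightarrow> bool"
  where "proper_dilation scaleN N act T \<longleftrightarrow> gen_submodule scaleN act N (T ` N) = N"

definition minimal_dilation ::
  "('k::field \<Rightarrow> 'n::ab_group_add \<Rightarrow> 'n) \<Rightarrow> 'n set \<Rightarrow> ('h \<Rightarrow> 'n \<Rightarrow> 'n) \<Rightarrow> ('n \<Rightarrow> 'n) \<Rightarrow> bool"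
  where "minimal_dilation scaleN N act T \<longleftrightarrow>
    (\<forall>N'. N' \<subseteq> N \<longrightarrow> H_submodule scaleN act N' \<longrightarrow> (\<forall>x\<in>N'. T x = 0) \<longrightarrow> N' \<subseteq> {0})"

text \<open>Hom_k(H,M), realised inside the type 'h \<Rightarrow> 'm with pointwise operations.\<close>
definition hom_scale :: "('k::field \<Rightarrow> 'm::ab_group_add \<Rightarrow> 'm) \<Rightarrow> 'k \<Rightarrow> ('h \<Rightarrow> 'm) \<Rightarrow> ('h \<Rightarrow> 'm)"
  where "hom_scale scaleM c f = (\<lambda>x. scaleM c (f x))"

definition Hom :: "('k::field \<Rightarrow> 'h::ab_group_add \<Rightarrow> 'h) \<Rightarrow> ('k \<Rightarrow> 'm::ab_group_add \<Rightarrow> 'm) \<Rightarrow> ('h \<Rightarrow> 'm) set"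
  where "Hom scaleH scaleM = {f. Vector_Spaces.linear scaleH scaleM f}"

definition hom_act :: "'h::times \<Rightarrow> ('h \<Rightarrow> 'm) \<Rightarrow> ('h \<Rightarrow> 'm)" where
  "hom_act h f = (\<lambda>k. f (k * h))"

definition phi :: "('h \<Rightarrow> 'm \<Rightarrow> 'm) \<Rightarrow> 'm \<Rightarrow> ('h \<Rightarrow> 'm)"
  where "phi rep m = (\<lambda>h. rep h m)"

definition Mbar :: "('k::field \<Rightarrow> 'h::ring_1 \<Rightarrow> 'h) \<Rightarrow> ('k \<Rightarrow> 'm::ab_group_add \<Rightarrow> 'm) \<Rightarrow> ('h \<Rightarrow> 'm \<Rightarrow> 'm) \<Rightarrow> ('h \<Rightarrow> 'm) set"
  where "Mbar scaleH scaleM rep =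
    gen_submodule (hom_scale scaleM) hom_act (Hom scaleH scaleM) (range (phi rep))"

definition Tpi :: "('h \<Rightarrow> 'm \<Rightarrow> 'm) \<Rightarrow> ('h::one \<Rightarrow> 'm) \<Rightarrow> ('h \<Rightarrow> 'm)"
  where "Tpi rep f = phi rep (f 1)"

end

theory Submission
  imports Defs
begin

lemma subspace_iff: "vector_space s \<Longrightarrow> module.subspace s S \<longleftrightarrow> 0 \<in> S \<and> (\<forall>x\<in>S. \<forall>y\<in>S. x + y \<in> S) \<and> (\<forall>c. \<forall>x\<in>S. s c x \<in> S)"
  by (simp add: module.subspace_def module_iff_vector_space)

lemma linear_iff: "Vector_Spaces.linear s1 s2 f \<longleftrightarrow> vector_space s1 \<and> vector_space s2 \<and>
   (\<forall>x y. f (x + y) = f x + f y) \<and> (\<forall>c x. f (s1 c x) = s2 c (f x))"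
  unfolding Vector_Spaces.linear_def module_hom_def module_hom_axioms_def module_iff_vector_space by auto

lemma vs_zero: "vector_space s \<Longrightarrow> s c 0 = 0"
  by (metis module.scale_zero_right module_iff_vector_space)

lemma vs_hom: "vector_space s \<Longrightarrow> vector_space (hom_scale s)"
  unfolding vector_space_def hom_scale_def by (auto simp: fun_eq_iff)

lemma sumlist_apply: "sum_list (map (\<lambda>(a,b). F a b) xs) x = sum_list (map (\<lambda>(a,b). F a b x) xs)"
  by (induction xs) auto

lemma sw_apply: "sw cop h F x = sw cop h (\<lambda>a b. F a b x)"
  unfolding sw_def by (rule sumlist_apply)

lemma sumlist_hom: "g 0 = 0 \<Longrightarrow> (\<And>u v. g (u+v) = g u + g v) \<Longrightarrow>
   g (sum_list (map (\<lambda>(a,b). F a b) xs)) = sum_list (map (\<lambda>(a,b). g (F a b)) xs)"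
  by (induction xs) auto

lemma sw_hom: "g 0 = 0 \<Longrightarrow> (\<And>u v. g (u+v) = g u + g v) \<Longrightarrow> g (sw cop h F) = sw cop h (\<lambda>a b. g (F a b))"
  unfolding sw_def by (rule sumlist_hom)

lemma sumlist_add: fixes F :: "_ \<Rightarrow> _ \<Rightarrow> 'v::comm_monoid_add" shows "sum_list (map (\<lambda>(a,b). F a b + G a b) xs) = sum_list (map (\<lambda>(a,b). F a b) xs) + sum_list (map (\<lambda>(a,b). G a b) xs)"
  by (induction xs) (auto simp: ac_simps)

lemma sw_add: fixes F :: "_ \<Rightarrow> _ \<Rightarrow> 'v::comm_monoid_add" shows "sw cop h (\<lambda>a b. F a b + G a b) = sw cop h F + sw cop h G"
  unfolding sw_def by (rule sumlist_add)

lemma gen_sub: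
  assumes "vector_space s" "H_submodule s act N" "X \<subseteq> N"
  shows "gen_submodule s act N X \<subseteq> N \<and> H_submodule s act (gen_submodule s act N X) \<and> X \<subseteq> gen_submodule s act N X
    \<and> (\<forall>N'. N' \<subseteq> N \<longrightarrow> H_submodule s act N' \<longrightarrow> X \<subseteq> N' \<longrightarrow> gen_submodule s act N X \<subseteq> N')"
  using assms unfolding gen_submodule_def H_submodule_def subspace_iff[OF assms(1)]
  by blast

theorem mainTheorem1:
  fixes scaleH :: "'k::field \<Rightarrow> 'h::ring_1 \<Rightarrow> 'h"
    and cop :: "'h \<Rightarrow> ('h \<times> 'h) list" and eps :: "'h \<Rightarrow> 'k" and S :: "'h \<Rightarrow> 'h"
    and scaleM :: "'k \<Rightarrow> 'm::ab_group_add \<Rightarrow> 'm" and rep :: "'h \<Rightarrow> 'm \<Rightarrow> 'm"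
  assumes "hopf_algebra scaleH cop eps S"
    and "partial_module scaleH cop S scaleM UNIV rep"
  shows "dilation scaleH cop S scaleM rep (hom_scale scaleM) (Mbar scaleH scaleM rep) hom_act (Tpi rep) (phi rep)
       \<and> proper_dilation (hom_scale scaleM) (Mbar scaleH scaleM rep) hom_act (Tpi rep)
       \<and> minimal_dilation (hom_scale scaleM) (Mbar scaleH scaleM rep) hom_act (Tpi rep)"
proof -
  let ?N = "Mbar scaleH scaleM rep" and ?Hm = "Hom scaleH scaleM" and ?sN = "hom_scale scaleM" and ?T = "Tpi rep"
  have VH: "vector_space scaleH" and mul: "\<forall>c x y. scaleH c (x*y) = scaleH c x * y \<and> scaleH c (x*y) = x * scaleH c y"
    using assms(1) unfolding hopf_algebra_def by blast+
  have mulL: "\<And>c x y. scaleH c (x*y) = scaleH c x * y" and mulR: "\<And>c x y. scaleH c (x*y) = x * scaleH c y"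
    using mul by blast+
  have VM: "vector_space scaleM" and r_add: "\<And>h v w. rep h (v + w) = rep h v + rep h w"
    and r_sc: "\<And>h c v. rep h (scaleM c v) = scaleM c (rep h v)"
    and r_hadd: "\<And>h k v. rep (h+k) v = rep h v + rep k v"
    and r_hsc: "\<And>c h v. rep (scaleH c h) v = scaleM c (rep h v)"
    and r1: "\<And>v. rep 1 v = v"
    and ax1: "\<And>h k v. sw cop k (\<lambda>a b. rep h (rep a (rep (S b) v))) = sw cop k (\<lambda>a b. rep (h * a) (rep (S b) v))"
    and ax2: "\<And>h k v. sw cop h (\<lambda>a b. rep a (rep (S b) (rep k v))) = sw cop h (\<lambda>a b. rep a (rep (S b * k) v))"
    using assms(2) unfolding partial_module_def by auto
  have MM: "module scaleM" using VM module_iff_vector_space by blast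
  have r0: "\<And>h. rep h 0 = 0" using r_add[of _ 0 0] by simp
  have sM0: "\<And>c. scaleM c 0 = 0" by (rule vs_zero[OF VM])
  have sMadd: "\<And>c x y. scaleM c (x + y) = scaleM c x + scaleM c y"
    by (rule module.scale_right_distrib[OF MM])
  have sMcomm: "\<And>c d x. scaleM c (scaleM d x) = scaleM d (scaleM c x)"
    by (rule module.scale_left_commute[OF MM])
  have VN: "vector_space ?sN" by (rule vs_hom[OF VM])
  have Hm_iff: "\<And>f. f \<in> ?Hm \<longleftrightarrow> (\<forall>x y. f (x+y) = f x + f y) \<and> (\<forall>c x. f (scaleH c x) = scaleM c (f x))"
    unfolding Hom_def linear_iff using VH VM by auto
  have Hm_sub: "H_submodule ?sN hom_act ?Hm"
    unfolding H_submodule_def subspace_iff[OF VN] hom_scale_def hom_act_def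
    by (auto simp: Hm_iff sM0 sMadd add_ac distrib_right mulL[symmetric] sMcomm)
  have phi_in: "\<And>m. phi rep m \<in> ?Hm"
    unfolding Hm_iff phi_def by (simp add: r_hadd r_hsc)
  have GS: "?N \<subseteq> ?Hm \<and> H_submodule ?sN hom_act ?N \<and> range (phi rep) \<subseteq> ?N
    \<and> (\<forall>N'. N' \<subseteq> ?Hm \<longrightarrow> H_submodule ?sN hom_act N' \<longrightarrow> range (phi rep) \<subseteq> N' \<longrightarrow> ?N \<subseteq> N')"
    unfolding Mbar_def by (rule gen_sub[OF VN Hm_sub]) (use phi_in in blast)
  hence NHm: "?N \<subseteq> ?Hm" and Nsub: "H_submodule ?sN hom_act ?N" and phiN: "\<And>m. phi rep m \<in> ?N"
    and Nmin: "\<And>N'. N' \<subseteq> ?Hm \<Longrightarrow> H_submodule ?sN hom_act N' \<Longrightarrow> range (phi rep) \<subseteq> N' \<Longrightarrow> ?N \<subseteq> N'"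
    by blast+
  have phi1: "\<And>m. phi rep m 1 = m" by (simp add: phi_def r1)
  have Timg: "?T ` ?N = range (phi rep)"
  proof
    show "?T ` ?N \<subseteq> range (phi rep)" unfolding Tpi_def by blast
    show "range (phi rep) \<subseteq> ?T ` ?N"
    proof
      fix y assume "y \<in> range (phi rep)"
      then obtain m where "y = phi rep m" by blast
      hence "y = ?T (phi rep m)" by (simp add: Tpi_def phi1)
      thus "y \<in> ?T ` ?N" using phiN by blast
    qed
  qed
  have Hmod: "H_module scaleH ?sN ?N hom_act"
  proof -
    have lin: "\<And>n. n \<in> ?N \<Longrightarrow> (\<forall>x y. n (x+y) = n x + n y) \<and> (\<forall>c x. n (scaleH c x) = scaleM c (n x))"
      using NHm Hm_iff by blast
    show ?thesis
      unfolding H_module_def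
      using VN Nsub unfolding H_submodule_def
      by (auto simp: hom_act_def hom_scale_def distrib_left mulR[symmetric] lin mult.assoc)
  qed
  have proj: "projection ?sN ?N ?T"
    unfolding projection_def using phiN
    by (auto simp: Tpi_def phi1 fun_eq_iff phi_def hom_scale_def r_add r_sc r1)
  define P where "P f \<longleftrightarrow> (\<forall>h. sw cop h (\<lambda>a b. rep a (f (S b))) = sw cop h (\<lambda>a b. rep a (rep (S b) (f 1))))" for f
  define G where "G = {f \<in> ?Hm. \<forall>k. P (hom_act k f)}"
  have swsc: "\<And>c F h. sw cop h (\<lambda>a b. scaleM c (F a b)) = scaleM c (sw cop h F)"
    by (rule sw_hom[symmetric]) (simp_all add: sM0 sMadd)
  have P0: "P 0" unfolding P_def by (simp add: r0)
  have Padd: "\<And>f g. P f \<Longrightarrow> P g \<Longrightarrow> P (f + g)"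
    unfolding P_def by (simp add: r_add sw_add)
  have Psc: "\<And>c f. P f \<Longrightarrow> P (hom_scale scaleM c f)"
    unfolding P_def hom_scale_def by (simp add: r_sc swsc)
  have Gsub: "H_submodule ?sN hom_act G"
    unfolding H_submodule_def subspace_iff[OF VN]
  proof (intro conjI ballI allI)
    show "0 \<in> G" using Hm_sub P0 unfolding G_def H_submodule_def subspace_iff[OF VN]
      by (simp add: hom_act_def zero_fun_def)
    fix x y assume "x \<in> G" "y \<in> G"
    then show "x + y \<in> G" using Hm_sub Padd unfolding G_def H_submodule_def subspace_iff[OF VN]
      by (simp add: hom_act_def plus_fun_def)
  next
    fix c x assume "x \<in> G"
    then show "?sN c x \<in> G" using Hm_sub Psc unfolding G_def H_submodule_def subspace_iff[OF VN]
      by (simp add: hom_act_def hom_scale_def)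
  next
    fix h x assume "x \<in> G"
    moreover have "\<And>k. hom_act k (hom_act h x) = hom_act (k * h) x"
      by (simp add: hom_act_def mult.assoc)
    ultimately show "hom_act h x \<in> G" using Hm_sub unfolding G_def H_submodule_def by auto
  qed
  have phiG: "range (phi rep) \<subseteq> G"
  proof
    fix y assume "y \<in> range (phi rep)"
    then obtain m where y: "y = phi rep m" by blast
    have "P (hom_act k (phi rep m))" for k
      unfolding P_def hom_act_def phi_def using ax2 by simp
    thus "y \<in> G" unfolding G_def y using phi_in by blast
  qed
  have GHm: "G \<subseteq> ?Hm" unfolding G_def by blast
  have NG: "?N \<subseteq> G" by (rule Nmin[OF GHm Gsub phiG])
  have PN: "\<And>n. n \<in> ?N \<Longrightarrow> P n"
  proof -
    fix n assume "n \<in> ?N"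
    hence "P (hom_act 1 n)" using NG unfolding G_def by blast
    moreover have "hom_act 1 n = n" by (simp add: hom_act_def)
    ultimately show "P n" by simp
  qed
  have cc: "c_condition cop S ?N hom_act ?T"
    unfolding c_condition_def
  proof (intro allI ballI)
    fix h n assume nN: "n \<in> ?N"
    show "Tconj cop S hom_act ?T h (?T n) = ?T (Tconj cop S hom_act ?T h n)"
    proof (rule ext)
      fix x
      have "Tconj cop S hom_act ?T h (?T n) x = sw cop h (\<lambda>a b. rep (x*a) (rep (S b) (n 1)))"
        unfolding Tconj_def sw_apply by (simp add: Tpi_def phi_def hom_act_def)
      also have "\<dots> = sw cop h (\<lambda>a b. rep x (rep a (rep (S b) (n 1))))" by (rule ax1[symmetric])
      also have "\<dots> = rep x (sw cop h (\<lambda>a b. rep a (rep (S b) (n 1))))"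
        by (rule sw_hom[symmetric]) (simp_all add: r0 r_add)
      also have "\<dots> = rep x (sw cop h (\<lambda>a b. rep a (n (S b))))"
        using PN[OF nN] unfolding P_def by simp
      also have "\<dots> = ?T (Tconj cop S hom_act ?T h n) x"
        unfolding Tconj_def Tpi_def phi_def sw_apply by (simp add: hom_act_def)
      finally show "Tconj cop S hom_act ?T h (?T n) x = ?T (Tconj cop S hom_act ?T h n) x" .
    qed
  qed
  have iso: "partial_iso scaleM UNIV rep ?sN (?T ` ?N) (\<lambda>h n. ?T (hom_act h n)) (phi rep)"
    unfolding partial_iso_def Timg
  proof (intro conjI ballI allI)
    show "bij_betw (phi rep) UNIV (range (phi rep))"
      unfolding bij_betw_def inj_def by (metis phi1)
  qed (auto simp: phi_def fun_eq_iff r_add r_sc hom_scale_def Tpi_def hom_act_def)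
  have propr: "proper_dilation ?sN ?N hom_act ?T"
  proof -
    have A: "gen_submodule ?sN hom_act ?N (range (phi rep)) \<subseteq> ?N \<and> H_submodule ?sN hom_act (gen_submodule ?sN hom_act ?N (range (phi rep)))
      \<and> range (phi rep) \<subseteq> gen_submodule ?sN hom_act ?N (range (phi rep))
      \<and> (\<forall>N'. N' \<subseteq> ?N \<longrightarrow> H_submodule ?sN hom_act N' \<longrightarrow> range (phi rep) \<subseteq> N' \<longrightarrow> gen_submodule ?sN hom_act ?N (range (phi rep)) \<subseteq> N')"
      by (rule gen_sub[OF VN Nsub]) (use phiN in blast)
    have "?N \<subseteq> gen_submodule ?sN hom_act ?N (range (phi rep))"
      apply (rule Nmin) using A NHm by blast+
    with A show ?thesis unfolding proper_dilation_def Timg by blast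
  qed
  have mini: "minimal_dilation ?sN ?N hom_act ?T"
    unfolding minimal_dilation_def
  proof (intro allI impI subsetI)
    fix N' f assume N': "N' \<subseteq> ?N" "H_submodule ?sN hom_act N'" "\<forall>x\<in>N'. ?T x = 0" and f: "f \<in> N'"
    have "f = 0"
    proof (rule ext)
      fix h
      have "hom_act h f \<in> N'" using N'(2) f unfolding H_submodule_def by blast
      hence "?T (hom_act h f) = 0" using N'(3) by blast
      hence "?T (hom_act h f) 1 = 0" by simp
      thus "f h = 0 h" by (simp add: Tpi_def phi_def hom_act_def r1)
    qed
    thus "f \<in> {0}" by simp
  qed
  show ?thesis unfolding dilation_def using Hmod proj cc iso propr mini by blast
qed

end
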